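(* Let $P$ be a finite poset and $R$ a commutative unital ring. Then $J^3_1(P,R)=[I^3(P,R),I^3(P,R)]$.
   Context: For a finite poset $P$, $P^3_\le=\{(x,y,z)\in P^3: x\le y\le z\}$, and $I^3(P,R)$ is the $R$-module of functions $f:P^3_\le\to R$ with multiplication $(fg)(x_1,x_2,x_3)=\sum f(x_1,y_1,y_2)g(y_1,y_2,x_3)$ over all $x_1\le y_1\le x_2\le y_2\le x_3$. For $a\le b$, $l(a,b)$ is the maximum of $|C|-1$ over chains $C$ in the interval $[a,b]$. $J^3_1(P,R)=\{f: f(x_1,x_2,x_3)=0 \text{ whenever } l(x_1,x_3)<1\}$, i.e. $f$ vanishes on all $(x,x,x)$. $[f,g]=fg-gf$, and for subsets $U,V$, $[U,V]$ is the $R$-submodule spanned by all $[u,v]$, $u\in U$, $v\in V$. *)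

theory Defs
  imports Main
begin

text \<open>The finite poset P is the type 'a of class finite and order.
  A function on P^3_le is represented by a function 'a => 'a => 'a => 'r
  vanishing outside P^3_le.\<close>

definition I3 :: "('a::{finite,order} \<Rightarrow> 'a \<Rightarrow> 'a \<Rightarrow> 'r::comm_ring_1) set" where
  "I3 = {f. \<forall>x y z. \<not> (x \<le> y \<and> y \<le> z) \<longrightarrow> f x y z = 0}"

definition mult3 ::
  "('a::{finite,order} \<Rightarrow> 'a \<Rightarrow> 'a \<Rightarrow> 'r::comm_ring_1) \<Rightarrow> ('a \<Rightarrow> 'a \<Rightarrow> 'a \<Rightarrow> 'r) \<Rightarrow> ('a \<Rightarrow> 'a \<Rightarrow> 'a \<Rightarrow> 'r)" where
  "mult3 f g = (\<lambda>x1 x2 x3. if x1 \<le> x2 \<and> x2 \<le> x3 then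
      (\<Sum>(y1, y2) \<in> {(y1, y2). x1 \<le> y1 \<and> y1 \<le> x2 \<and> x2 \<le> y2 \<and> y2 \<le> x3}.
          f x1 y1 y2 * g y1 y2 x3)
    else 0)"

definition commutator3 ::
  "('a::{finite,order} \<Rightarrow> 'a \<Rightarrow> 'a \<Rightarrow> 'r::comm_ring_1) \<Rightarrow> ('a \<Rightarrow> 'a \<Rightarrow> 'a \<Rightarrow> 'r) \<Rightarrow> ('a \<Rightarrow> 'a \<Rightarrow> 'a \<Rightarrow> 'r)" where
  "commutator3 f g = mult3 f g - mult3 g f"

definition rspan :: "('a \<Rightarrow> 'a \<Rightarrow> 'a \<Rightarrow> 'r::comm_ring_1) set \<Rightarrow> ('a \<Rightarrow> 'a \<Rightarrow> 'a \<Rightarrow> 'r) set" where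
  "rspan S = {h. \<exists>T c. finite T \<and> T \<subseteq> S \<and>
       h = (\<lambda>x y z. \<Sum>g\<in>T. c g * g x y z)}"

definition comm_span3 :: "('a::{finite,order} \<Rightarrow> 'a \<Rightarrow> 'a \<Rightarrow> 'r::comm_ring_1) set
    \<Rightarrow> ('a \<Rightarrow> 'a \<Rightarrow> 'a \<Rightarrow> 'r) set \<Rightarrow> ('a \<Rightarrow> 'a \<Rightarrow> 'a \<Rightarrow> 'r) set" where
  "comm_span3 U V = rspan {commutator3 u v | u v. u \<in> U \<and> v \<in> V}"

definition len :: "'a::{finite,order} \<Rightarrow> 'a \<Rightarrow> nat" where
  "len a b = Max {card C - 1 | C. C \<subseteq> {a..b} \<and> Complete_Partial_Order.chain (\<le>) C}"

definition J3_1 :: "('a::{finite,order} \<Rightarrow> 'a \<Rightarrow> 'a \<Rightarrow> 'r::comm_ring_1) set" where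
  "J3_1 = {f \<in> I3. \<forall>x1 x2 x3. x1 \<le> x2 \<and> x2 \<le> x3 \<and> len x1 x3 < 1 \<longrightarrow> f x1 x2 x3 = 0}"

end

theory Submission
  imports Defs
begin

definition ee :: "'a \<times> 'a \<times> 'a \<Rightarrow> ('a \<Rightarrow> 'a \<Rightarrow> 'a \<Rightarrow> 'r::comm_ring_1)" where
  "ee t = (\<lambda>x y z. if (x, y, z) = t then 1 else 0)"

lemma len_refl: "len (x::'a::{finite,order}) x = 0"
proof -
  let ?S = "{card C - 1 | C. C \<subseteq> {x..x} \<and> Complete_Partial_Order.chain (\<le>) C}"
  have fin: "finite ?S"
  proof -
    have "?S \<subseteq> (\<lambda>C. card C - 1) ` (UNIV :: 'a set set)" by blast
    then show ?thesis by (rule finite_subset) (rule finite_imageI, rule finite_UNIV)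
  qed
  have ne: "0 \<in> ?S"
    by (rule CollectI, rule exI[of _ "{}"]) (auto simp: chain_empty)
  have "\<forall>s\<in>?S. s \<le> 0"
  proof
    fix s assume "s \<in> ?S"
    then obtain C where "s = card C - 1" "C \<subseteq> {x}" by auto
    then have "card C \<le> 1" using card_mono[of "{x}" C] by auto
    then show "s \<le> 0" using \<open>s = card C - 1\<close> by simp
  qed
  then have "Max ?S \<le> 0" using fin ne by (subst Max_le_iff) auto
  then show ?thesis unfolding len_def by simp
qed

lemma len_lt: assumes "(x::'a::{finite,order}) < y" shows "1 \<le> len x y"
proof -
  let ?S = "{card C - 1 | C. C \<subseteq> {x..y} \<and> Complete_Partial_Order.chain (\<le>) C}"
  have fin: "finite ?S"
  proof -
    have "?S \<subseteq> (\<lambda>C. card C - 1) ` (UNIV :: 'a set set)" by blast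
    then show ?thesis by (rule finite_subset) (rule finite_imageI, rule finite_UNIV)
  qed
  have ch: "Complete_Partial_Order.chain (\<le>) {x, y}"
    using assms by (auto simp: Complete_Partial_Order.chain_def)
  have sub: "{x, y} \<subseteq> {x..y}" using assms by auto
  have mem: "card {x, y} - 1 \<in> ?S"
    using sub ch by blast
  have c1: "card {x, y} - 1 = 1" using assms by simp
  have "card {x, y} - 1 \<le> Max ?S" by (rule Max_ge[OF fin mem])
  then have "1 \<le> Max ?S" using c1 by simp
  then show ?thesis unfolding len_def by simp
qed

lemma len_lt1: assumes "(x::'a::{finite,order}) \<le> y" "len x y < 1" shows "x = y"
proof (rule ccontr)
  assume "x \<noteq> y"
  then have "x < y" using assms(1) by simp
  then show False using len_lt[of x y] assms(2) by simp
qed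

lemma J_char: "(J3_1 :: ('a::{finite,order} \<Rightarrow> 'a \<Rightarrow> 'a \<Rightarrow> 'r::comm_ring_1) set)
   = {f \<in> I3. \<forall>x. f x x x = 0}"
proof -
  have "(\<forall>x1 x2 x3. x1 \<le> x2 \<and> x2 \<le> x3 \<and> len x1 x3 < 1 \<longrightarrow> f x1 x2 x3 = 0)
     \<longleftrightarrow> (\<forall>x. f x x x = 0)" for f :: "'a \<Rightarrow> 'a \<Rightarrow> 'a \<Rightarrow> 'r"
  proof
    assume "\<forall>x1 x2 x3. x1 \<le> x2 \<and> x2 \<le> x3 \<and> len x1 x3 < 1 \<longrightarrow> f x1 x2 x3 = 0"
    then show "\<forall>x. f x x x = 0" using len_refl by (metis order_refl zero_less_one)
  next
    assume H: "\<forall>x. f x x x = 0"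
    show "\<forall>x1 x2 x3. x1 \<le> x2 \<and> x2 \<le> x3 \<and> len x1 x3 < 1 \<longrightarrow> f x1 x2 x3 = 0"
    proof (intro allI impI)
      fix x1 x2 x3 :: 'a assume a: "x1 \<le> x2 \<and> x2 \<le> x3 \<and> len x1 x3 < 1"
      then have "x1 = x3" using len_lt1[of x1 x3] by auto
      then have "x1 = x2" using a by (auto dest: order_antisym)
      then show "f x1 x2 x3 = 0" using H \<open>x1 = x3\<close> by simp
    qed
  qed
  then show ?thesis unfolding J3_1_def by auto
qed

lemma ee_I3: assumes "a \<le> b" "b \<le> c" shows "ee (a,b,c) \<in> I3"
  using assms unfolding I3_def ee_def by auto

lemma mult3_ee:
  fixes a b c :: "'a::{finite,order}"
  assumes "a \<le> b" "b \<le> c"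
  shows "mult3 (ee (a,b,b)) (ee (b,b,c)) = (ee (a,b,c) :: 'a \<Rightarrow> 'a \<Rightarrow> 'a \<Rightarrow> 'r::comm_ring_1)"
proof (intro ext)
  fix x1 x2 x3 :: 'a
  let ?S = "{(y1, y2). x1 \<le> y1 \<and> y1 \<le> x2 \<and> x2 \<le> y2 \<and> y2 \<le> x3}"
  have "(\<Sum>(y1, y2) \<in> ?S. (ee (a,b,b) x1 y1 y2 :: 'r) * ee (b,b,c) y1 y2 x3)
      = (\<Sum>p \<in> ?S. if p = (b,b) then (if x1 = a \<and> x3 = c then 1 else 0) else 0)"
    by (rule sum.cong) (auto simp: ee_def split: if_splits)
  also have "\<dots> = (if (b,b) \<in> ?S then (if x1 = a \<and> x3 = c then 1 else 0) else 0)"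
    by (subst sum.delta) auto
  finally have eq: "(\<Sum>(y1, y2) \<in> ?S. (ee (a,b,b) x1 y1 y2 :: 'r) * ee (b,b,c) y1 y2 x3)
      = (if (b,b) \<in> ?S then (if x1 = a \<and> x3 = c then 1 else 0) else 0)" .
  show "mult3 (ee (a,b,b)) (ee (b,b,c)) x1 x2 x3 = (ee (a,b,c) x1 x2 x3 :: 'r)"
  proof (cases "x1 \<le> x2 \<and> x2 \<le> x3")
    case True
    have iff: "((b,b) \<in> ?S \<and> x1 = a \<and> x3 = c) \<longleftrightarrow> (x1 = a \<and> x2 = b \<and> x3 = c)"
    proof
      assume L: "(b,b) \<in> ?S \<and> x1 = a \<and> x3 = c"
      then have "b \<le> x2" "x2 \<le> b" by auto
      then have "x2 = b" by (rule order_antisym[rotated])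
      then show "x1 = a \<and> x2 = b \<and> x3 = c" using L by simp
    next
      assume R: "x1 = a \<and> x2 = b \<and> x3 = c"
      then show "(b,b) \<in> ?S \<and> x1 = a \<and> x3 = c" using assms by simp
    qed
    have "mult3 (ee (a,b,b)) (ee (b,b,c)) x1 x2 x3
        = (if (b,b) \<in> ?S then (if x1 = a \<and> x3 = c then 1 else 0) else (0::'r))"
      unfolding mult3_def using True eq by simp
    also have "\<dots> = (if ((b,b) \<in> ?S \<and> x1 = a \<and> x3 = c) then 1 else 0)" by (rule if_if_eq_conj)
    also have "\<dots> = ee (a,b,c) x1 x2 x3" unfolding iff ee_def by simp
    finally show ?thesis .
  next
    case False
    then have "(x1, x2, x3) \<noteq> (a,b,c)" using assms by auto
    then have "(ee (a,b,c) x1 x2 x3 :: 'r) = 0" by (simp add: ee_def)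
    moreover have "mult3 (ee (a,b,b)) (ee (b,b,c)) x1 x2 x3 = (0::'r)"
      by (subst mult3_def) (simp only: False if_False)
    ultimately show ?thesis by simp
  qed
qed

lemma mult3_ee2:
  fixes a b c :: "'a::{finite,order}"
  assumes "a \<le> b" "b \<le> c" "a \<noteq> c"
  shows "mult3 (ee (b,b,c)) (ee (a,b,b)) = ((\<lambda>_ _ _. 0) :: 'a \<Rightarrow> 'a \<Rightarrow> 'a \<Rightarrow> 'r::comm_ring_1)"
proof (intro ext)
  fix x1 x2 x3 :: 'a
  let ?S = "{(y1, y2). x1 \<le> y1 \<and> y1 \<le> x2 \<and> x2 \<le> y2 \<and> y2 \<le> x3}"
  have "(\<Sum>(y1, y2) \<in> ?S. (ee (b,b,c) x1 y1 y2 :: 'r) * ee (a,b,b) y1 y2 x3) = 0"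
    by (rule sum.neutral) (use assms in \<open>auto simp: ee_def\<close>)
  then show "mult3 (ee (b,b,c)) (ee (a,b,b)) x1 x2 x3 = (0::'r)"
    unfolding mult3_def by auto
qed

lemma ee_comm:
  fixes a b c :: "'a::{finite,order}"
  assumes "a \<le> b" "b \<le> c" "a \<noteq> c"
  shows "(ee (a,b,c) :: 'a \<Rightarrow> 'a \<Rightarrow> 'a \<Rightarrow> 'r::comm_ring_1) = commutator3 (ee (a,b,b)) (ee (b,b,c))"
  unfolding commutator3_def mult3_ee[OF assms(1,2)] mult3_ee2[OF assms] by (simp add: fun_diff_def)

lemma comm_I3:
  fixes u v :: "'a::{finite,order} \<Rightarrow> 'a \<Rightarrow> 'a \<Rightarrow> 'r::comm_ring_1"
  shows "\<not> (x \<le> y \<and> y \<le> z) \<Longrightarrow> commutator3 u v x y z = 0"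
    and "commutator3 u v x x x = 0"
proof -
  show "\<not> (x \<le> y \<and> y \<le> z) \<Longrightarrow> commutator3 u v x y z = 0"
    unfolding commutator3_def mult3_def by auto
  have S: "{(y1, y2). x \<le> y1 \<and> y1 \<le> x \<and> x \<le> y2 \<and> y2 \<le> x} = {(x, x)}"
    by (auto dest: order_antisym)
  show "commutator3 u v x x x = 0"
    unfolding commutator3_def mult3_def by (simp add: S mult.commute)
qed

theorem proposition2p4:
  shows "(J3_1 :: ('a::{finite,order} \<Rightarrow> 'a \<Rightarrow> 'a \<Rightarrow> 'r::comm_ring_1) set)
           = comm_span3 I3 I3"
proof
  show "comm_span3 I3 I3 \<subseteq> (J3_1 :: ('a \<Rightarrow> 'a \<Rightarrow> 'a \<Rightarrow> 'r) set)"
  proof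
    fix h :: "'a \<Rightarrow> 'a \<Rightarrow> 'a \<Rightarrow> 'r"
    assume "h \<in> comm_span3 I3 I3"
    then obtain T c where T: "finite T" "T \<subseteq> {commutator3 u v | u v. u \<in> I3 \<and> v \<in> I3}"
      and h: "h = (\<lambda>x y z. \<Sum>g\<in>T. c g * g x y z)"
      unfolding comm_span3_def rspan_def by blast
    have A: "g x y z = 0" if "g \<in> T" "\<not> (x \<le> y \<and> y \<le> z)" for g x y z
      using T(2) that comm_I3(1) by blast
    have B: "g x x x = 0" if "g \<in> T" for g x
      using T(2) that comm_I3(2) by blast
    show "h \<in> J3_1" unfolding J_char I3_def h
      using A B by (auto intro!: sum.neutral simp: A B)
  qed
next
  show "(J3_1 :: ('a \<Rightarrow> 'a \<Rightarrow> 'a \<Rightarrow> 'r) set) \<subseteq> comm_span3 I3 I3"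
  proof
    fix f :: "'a \<Rightarrow> 'a \<Rightarrow> 'a \<Rightarrow> 'r"
    assume "f \<in> J3_1"
    then have fI: "\<And>x y z. \<not> (x \<le> y \<and> y \<le> z) \<Longrightarrow> f x y z = 0"
      and fd: "\<And>x. f x x x = 0"
      unfolding J_char I3_def by auto
    define D where "D = {(a, b, c). (a::'a) \<le> b \<and> b \<le> c \<and> a \<noteq> c}"
    define E where "E = (\<lambda>t. ee t :: 'a \<Rightarrow> 'a \<Rightarrow> 'a \<Rightarrow> 'r)"
    have injE: "inj_on E D"
    proof (rule inj_onI)
      fix s t assume "s \<in> D" "t \<in> D" "E s = E t"
      obtain a b c where t: "t = (a,b,c)" by (cases t) auto
      have "E s a b c = E t a b c" using \<open>E s = E t\<close> by simp
      then show "s = t" unfolding E_def ee_def t by (auto split: if_splits)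
    qed
    have sub: "E ` D \<subseteq> {commutator3 u v | u v. u \<in> I3 \<and> v \<in> I3}"
    proof
      fix g assume "g \<in> E ` D"
      then obtain a b c where "a \<le> b" "b \<le> c" "a \<noteq> c" "g = E (a,b,c)"
        unfolding D_def by auto
      then show "g \<in> {commutator3 u v | u v. u \<in> I3 \<and> v \<in> I3}"
        unfolding E_def using ee_comm[of a b c] ee_I3[of a b b] ee_I3[of b b c]
        by (intro CollectI exI[of _ "ee (a,b,b)"] exI[of _ "ee (b,b,c)"]) auto
    qed
    define c where "c = (\<lambda>g. case inv_into D E g of (a, b, c) \<Rightarrow> f a b c)"
    have feq: "f = (\<lambda>x y z. \<Sum>g\<in>E ` D. c g * g x y z)"
    proof (intro ext)
      fix x y z
      have "(\<Sum>g\<in>E ` D. c g * g x y z) = (\<Sum>t\<in>D. c (E t) * E t x y z)"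
        by (rule sum.reindex[OF injE, unfolded comp_def])
      also have "\<dots> = (\<Sum>t\<in>D. if t = (x,y,z) then f x y z else 0)"
      proof (rule sum.cong)
        fix t assume "t \<in> D"
        then have "c (E t) = (case t of (a,b,c) \<Rightarrow> f a b c)"
          unfolding c_def using inv_into_f_f[OF injE] by simp
        then show "c (E t) * E t x y z = (if t = (x,y,z) then f x y z else 0)"
          unfolding E_def ee_def by auto
      qed simp
      also have "\<dots> = (if (x,y,z) \<in> D then f x y z else 0)"
        by (subst sum.delta) simp_all
      also have "\<dots> = f x y z"
      proof (cases "(x,y,z) \<in> D")
        case False
        show ?thesis
        proof (cases "x \<le> y \<and> y \<le> z")
          case True
          then have "x = z" using False unfolding D_def by auto
          then have "x = y" using True by (auto intro: order_antisym)
          then show ?thesis using False fd \<open>x = z\<close> by simp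
        next
          case False2: False
          then show ?thesis using False fI by simp
        qed
      qed simp
      finally show "f x y z = (\<Sum>g\<in>E ` D. c g * g x y z)" by simp
    qed
    show "f \<in> comm_span3 I3 I3"
      unfolding comm_span3_def rspan_def
      using sub feq by (intro CollectI exI[of _ "E ` D"] exI[of _ c]) simp
  qed
qed

end
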